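(* Fix $k\ge0$. Let $\mathcal G$ be a discrete groupoid acting self-similarly on a finitely aligned $(k+1)$-graph $\Lambda$, and let $\Gamma=d^{-1}(\mathbb N^k\times\{0\})$. Then $\Gamma\bowtie\mathcal G$ is a concordant subcategory of $\Lambda\bowtie\mathcal G$.
   Context: A $(k+1)$-graph is a countable small category $\Lambda$ with a functor $d:\Lambda\to\mathbb N^{k+1}$ such that whenever $d(\lambda)=m+n$ there are unique $\mu,\nu$ with $\lambda=\mu\nu$, $d(\mu)=m$, $d(\nu)=n$; it is finitely aligned if for all $\mu,\nu$ there is finite $F$ with $\mu\Lambda\cap\nu\Lambda=\bigcup_{c\in F}c\Lambda$. A self-similar action of a discrete groupoid $\mathcal G$ ($\mathcal G^0=\Lambda^0$) on $\Lambda$ consists of a left action $g\triangleright\lambda\in\Lambda$ and right action $g\triangleleft\lambda\in\mathcal G$ (for $s(g)=r(\lambda)$) with $s(g\triangleright\lambda)=r(g\triangleleft\lambda)$, $g\triangleright(\lambda\mu)=(g\triangleright\lambda)((g\triangleleft\lambda)\triangleright\mu)$, $(gh)\triangleleft\lambda=(g\triangleleft(h\triangleright\lambda))(h\triangleleft\lambda)$, and $d(g\triangleright\lambda)=d(\lambda)$. $\Lambda\bowtie\mathcal G$ is the Zappa–Szép product: morphisms $\lambda g$ ($s(\lambda)=r(g)$) with product $\lambda g\mu h=\lambda(g\triangleright\mu)(g\triangleleft\mu)h$; $\Gamma\bowtie\mathcal G$ is a subcategory. For a finitely aligned left-cancellative category $\mathcal X$ ($x\mathcal X=\{xx'\}$,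 $F\mathcal X=\bigcup_{c\in F}c\mathcal X$, $F$ independent if $a\notin a'\mathcal X$ for distinct $a,a'\in F$), a subcategory $\mathcal C$ is concordant if for all $c_1,c_2\in\mathcal C$ with $c_1\mathcal X\cap c_2\mathcal X\ne\emptyset$ there is a finite independent $F\subseteq\mathcal C$ with $c_1\mathcal C\cap c_2\mathcal C=F\mathcal C$ such that whenever $x_1,x_2\in\mathcal X$ satisfy $c_1x_1=c_2x_2$, there exist $a_1,a_2$ with $c_1a_1=c_2a_2\in F$ and $y\in\mathcal X$ with $x_1=a_1y$, $x_2=a_2y$. *)

theory Defs
  imports Main "HOL-Library.Countable_Set"
begin

record ('v, 'm) cat =
  cObj  :: "'v set"
  cMor  :: "'m set"
  cSrc  :: "'m \<Rightarrow> 'v"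
  cRng  :: "'m \<Rightarrow> 'v"
  cComp :: "'m \<Rightarrow> 'm \<Rightarrow> 'm"
  cId   :: "'v \<Rightarrow> 'm"

definition composable :: "('v, 'm) cat \<Rightarrow> 'm \<Rightarrow> 'm \<Rightarrow> bool" where
  "composable C a b \<longleftrightarrow> a \<in> cMor C \<and> b \<in> cMor C \<and> cSrc C a = cRng C b"

definition category :: "('v, 'm) cat \<Rightarrow> bool" where
  "category C \<longleftrightarrow>
     (\<forall>a\<in>cMor C. cSrc C a \<in> cObj C \<and> cRng C a \<in> cObj C) \<and>
     (\<forall>v\<in>cObj C. cId C v \<in> cMor C \<and> cSrc C (cId C v) = v \<and> cRng C (cId C v) = v) \<and>
     (\<forall>a b. composable C a b \<longrightarrow>
        cComp C a b \<in> cMor C \<and> cSrc C (cComp C a b) = cSrc C b \<and> cRng C (cComp C a b) = cRng C a) \<and>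
     (\<forall>a\<in>cMor C. cComp C (cId C (cRng C a)) a = a \<and> cComp C a (cId C (cSrc C a)) = a) \<and>
     (\<forall>a b c. composable C a b \<longrightarrow> composable C b c \<longrightarrow>
        cComp C (cComp C a b) c = cComp C a (cComp C b c))"

definition groupoid :: "('v, 'm) cat \<Rightarrow> bool" where
  "groupoid G \<longleftrightarrow> category G \<and>
     (\<forall>g\<in>cMor G. \<exists>h\<in>cMor G. composable G g h \<and> composable G h g \<and>
        cComp G g h = cId G (cRng G g) \<and> cComp G h g = cId G (cSrc G g))"

definition rideal :: "('v, 'm) cat \<Rightarrow> 'm set \<Rightarrow> 'm \<Rightarrow> 'm set" where
  "rideal X C x = {cComp X x y | y. y \<in> C \<and> composable X x y}"

definition finitely_aligned :: "('v, 'm) cat \<Rightarrow> bool" where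
  "finitely_aligned X \<longleftrightarrow>
     (\<forall>a\<in>cMor X. \<forall>b\<in>cMor X. \<exists>F. finite F \<and> F \<subseteq> cMor X \<and>
        rideal X (cMor X) a \<inter> rideal X (cMor X) b = (\<Union>c\<in>F. rideal X (cMor X) c))"

definition subcategory :: "('v, 'm) cat \<Rightarrow> 'm set \<Rightarrow> bool" where
  "subcategory X C \<longleftrightarrow> C \<subseteq> cMor X \<and>
     (\<forall>a\<in>C. cId X (cRng X a) \<in> C \<and> cId X (cSrc X a) \<in> C) \<and>
     (\<forall>a\<in>C. \<forall>b\<in>C. composable X a b \<longrightarrow> cComp X a b \<in> C)"

definition independent :: "('v, 'm) cat \<Rightarrow> 'm set \<Rightarrow> bool" where
  "independent X F \<longleftrightarrow> (\<forall>a\<in>F. \<forall>a'\<in>F. a \<noteq> a' \<longrightarrow> a \<notin> rideal X (cMor X) a')"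

definition concordant :: "('v, 'm) cat \<Rightarrow> 'm set \<Rightarrow> bool" where
  "concordant X C \<longleftrightarrow> subcategory X C \<and>
     (\<forall>c1\<in>C. \<forall>c2\<in>C. rideal X (cMor X) c1 \<inter> rideal X (cMor X) c2 \<noteq> {} \<longrightarrow>
        (\<exists>F. finite F \<and> F \<subseteq> C \<and> independent X F \<and>
           rideal X C c1 \<inter> rideal X C c2 = (\<Union>c\<in>F. rideal X C c) \<and>
           (\<forall>x1 x2. composable X c1 x1 \<and> composable X c2 x2 \<and> cComp X c1 x1 = cComp X c2 x2 \<longrightarrow>
              (\<exists>a1 a2 y. composable X c1 a1 \<and> composable X c2 a2 \<and>
                 cComp X c1 a1 = cComp X c2 a2 \<and> cComp X c1 a1 \<in> F \<and>
                 composable X a1 y \<and> composable X a2 y \<and>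
                 x1 = cComp X a1 y \<and> x2 = cComp X a2 y))))"

text \<open>An n-graph: degrees live in N^n, encoded as functions nat => nat vanishing at
  coordinates >= n (coordinates 0..n-1), with pointwise addition.\<close>
definition k_graph :: "nat \<Rightarrow> ('v, 'm) cat \<Rightarrow> ('m \<Rightarrow> nat \<Rightarrow> nat) \<Rightarrow> bool" where
  "k_graph n L d \<longleftrightarrow> category L \<and> countable (cMor L) \<and> countable (cObj L) \<and>
     (\<forall>l\<in>cMor L. \<forall>i\<ge>n. d l i = 0) \<and>
     (\<forall>v\<in>cObj L. d (cId L v) = (\<lambda>i. 0)) \<and>
     (\<forall>a b. composable L a b \<longrightarrow> d (cComp L a b) = (\<lambda>i. d a i + d b i)) \<and>
     (\<forall>l\<in>cMor L. \<forall>p q. d l = (\<lambda>i. p i + q i) \<longrightarrow>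
        (\<exists>!(a, b). composable L a b \<and> l = cComp L a b \<and> d a = p \<and> d b = q))"

definition self_similar :: "('v, 'm) cat \<Rightarrow> ('m \<Rightarrow> nat \<Rightarrow> nat) \<Rightarrow> ('v, 'g) cat \<Rightarrow>
    ('g \<Rightarrow> 'm \<Rightarrow> 'm) \<Rightarrow> ('g \<Rightarrow> 'm \<Rightarrow> 'g) \<Rightarrow> bool" where
  "self_similar L d G act res \<longleftrightarrow>
     groupoid G \<and> cObj G = cObj L \<and>
     (\<forall>g\<in>cMor G. \<forall>l\<in>cMor L. cSrc G g = cRng L l \<longrightarrow>
        act g l \<in> cMor L \<and> res g l \<in> cMor G \<and>
        \<comment> \<open>left action of G on Lambda\<close>
        cRng L (act g l) = cRng G g \<and>
        \<comment> \<open>right action of Lambda on G\<close>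
        cSrc G (res g l) = cSrc L l \<and>
        \<comment> \<open>compatibility\<close>
        cSrc L (act g l) = cRng G (res g l) \<and>
        d (act g l) = d l) \<and>
     (\<forall>l\<in>cMor L. act (cId G (cRng L l)) l = l) \<and>
     (\<forall>g\<in>cMor G. res g (cId L (cSrc G g)) = g) \<and>
     (\<forall>g h l. composable G g h \<longrightarrow> l \<in> cMor L \<longrightarrow> cSrc G h = cRng L l \<longrightarrow>
        act (cComp G g h) l = act g (act h l) \<and>
        res (cComp G g h) l = cComp G (res g (act h l)) (res h l)) \<and>
     (\<forall>g l m. g \<in> cMor G \<longrightarrow> composable L l m \<longrightarrow> cSrc G g = cRng L l \<longrightarrow>
        act g (cComp L l m) = cComp L (act g l) (act (res g l) m) \<and>
        res g (cComp L l m) = res (res g l) m)"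

definition zappa_szep :: "('v, 'm) cat \<Rightarrow> ('v, 'g) cat \<Rightarrow>
    ('g \<Rightarrow> 'm \<Rightarrow> 'm) \<Rightarrow> ('g \<Rightarrow> 'm \<Rightarrow> 'g) \<Rightarrow> ('v, 'm \<times> 'g) cat" where
  "zappa_szep L G act res =
     \<lparr> cObj = cObj L,
       cMor = {(l, g). l \<in> cMor L \<and> g \<in> cMor G \<and> cSrc L l = cRng G g},
       cSrc = (\<lambda>(l, g). cSrc G g),
       cRng = (\<lambda>(l, g). cRng L l),
       cComp = (\<lambda>(l, g) (m, h). (cComp L l (act g m), cComp G (res g m) h)),
       cId = (\<lambda>v. (cId L v, cId G v)) \<rparr>"

text \<open>Gamma bowtie G, where Gamma = d^{-1}(N^k x {0}) (last coordinate, index k, is 0).\<close>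
definition gamma_zs :: "nat \<Rightarrow> ('v, 'm) cat \<Rightarrow> ('m \<Rightarrow> nat \<Rightarrow> nat) \<Rightarrow> ('v, 'g) cat \<Rightarrow>
    ('g \<Rightarrow> 'm \<Rightarrow> 'm) \<Rightarrow> ('g \<Rightarrow> 'm \<Rightarrow> 'g) \<Rightarrow> ('m \<times> 'g) set" where
  "gamma_zs k L d G act res = {(l, g) \<in> cMor (zappa_szep L G act res). d l k = 0}"

end

theory Submission
  imports Defs
begin


lemma cat_comp:
  assumes "category C" "composable C a b"
  shows "cComp C a b \<in> cMor C" "cSrc C (cComp C a b) = cSrc C b" "cRng C (cComp C a b) = cRng C a"
  using assms unfolding category_def by blast+

lemma cat_assoc:
  assumes "category C" "composable C a b" "composable C b c"
  shows "cComp C (cComp C a b) c = cComp C a (cComp C b c)"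
  using assms unfolding category_def by blast

lemma cat_id:
  assumes "category C" "v \<in> cObj C"
  shows "cId C v \<in> cMor C" "cSrc C (cId C v) = v" "cRng C (cId C v) = v"
  using assms unfolding category_def by blast+

lemma cat_obj:
  assumes "category C" "a \<in> cMor C"
  shows "cSrc C a \<in> cObj C" "cRng C a \<in> cObj C"
  using assms unfolding category_def by blast+

lemma cat_idl:
  assumes "category C" "a \<in> cMor C"
  shows "cComp C (cId C (cRng C a)) a = a"
  using assms unfolding category_def by blast

lemma cat_idr:
  assumes "category C" "a \<in> cMor C"
  shows "cComp C a (cId C (cSrc C a)) = a"
  using assms unfolding category_def by blast

lemma grp_inv:
  assumes "groupoid G" "g \<in> cMor G"
  obtains h where "composable G g h" "composable G h g" "cComp G g h = cId G (cRng G g)"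
    "cComp G h g = cId G (cSrc G g)"
  using assms unfolding groupoid_def by blast

lemma grp_cancel:
  assumes "groupoid G" "composable G g h" "composable G g h'" "cComp G g h = cComp G g h'"
  shows "h = h'"
proof -
  have cat: "category G" using assms(1) unfolding groupoid_def by blast
  have g: "g \<in> cMor G" using assms(2) unfolding composable_def by blast
  obtain gi where i: "composable G g gi" "composable G gi g" "cComp G gi g = cId G (cSrc G g)"
    using grp_inv[OF assms(1) g] by metis
  have h: "h \<in> cMor G" "cRng G h = cSrc G g" using assms(2) unfolding composable_def by auto
  have h': "h' \<in> cMor G" "cRng G h' = cSrc G g" using assms(3) unfolding composable_def by auto
  have "h = cComp G (cComp G gi g) h"
    using i(3) cat_idl[OF cat h(1)] h by simp
  also have "\<dots> = cComp G gi (cComp G g h)" using cat_assoc[OF cat i(2) assms(2)] .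
  also have "\<dots> = cComp G gi (cComp G g h')" using assms(4) by simp
  also have "\<dots> = cComp G (cComp G gi g) h'" using cat_assoc[OF cat i(2) assms(3)] by simp
  also have "\<dots> = h'" using i(3) cat_idl[OF cat h'(1)] h' by simp
  finally show ?thesis .
qed

locale zs =
  fixes k :: nat
    and L :: "('v, 'm) cat" and d :: "'m \<Rightarrow> nat \<Rightarrow> nat"
    and G :: "('v, 'g) cat" and act :: "'g \<Rightarrow> 'm \<Rightarrow> 'm" and res :: "'g \<Rightarrow> 'm \<Rightarrow> 'g"
  assumes kg: "k_graph (Suc k) L d"
    and fa: "finitely_aligned L"
    and ss: "self_similar L d G act res"
begin

lemma catL: "category L" using kg unfolding k_graph_def by blast
lemma grpG: "groupoid G" using ss unfolding self_similar_def by blast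
lemma catG: "category G" using grpG unfolding groupoid_def by blast
lemma objs: "cObj G = cObj L" using ss unfolding self_similar_def by blast

lemma dcomp: "composable L a b \<Longrightarrow> d (cComp L a b) = (\<lambda>i. d a i + d b i)"
  using kg unfolding k_graph_def by blast
lemma did: "v \<in> cObj L \<Longrightarrow> d (cId L v) = (\<lambda>i. 0)"
  using kg unfolding k_graph_def by blast

lemma ex1_two: "\<exists>!x. P x \<Longrightarrow> P a \<Longrightarrow> P b \<Longrightarrow> a = b"
  by (blast elim: ex1E)

lemma dfac_all: "\<forall>l\<in>cMor L. \<forall>p q. d l = (\<lambda>i. p i + q i) \<longrightarrow>
        (\<exists>!(a, b). composable L a b \<and> l = cComp L a b \<and> d a = p \<and> d b = q)"
  using kg unfolding k_graph_def by (elim conjE)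

lemma dfac_one:
  assumes "l \<in> cMor L" "d l = (\<lambda>i. p i + q i)"
  shows "\<exists>!(a, b). composable L a b \<and> l = cComp L a b \<and> d a = p \<and> d b = q"
  using dfac_all assms by blast

lemma dfac_ex:
  assumes "l \<in> cMor L" "d l = (\<lambda>i. p i + q i)"
  shows "\<exists>a b. composable L a b \<and> l = cComp L a b \<and> d a = p \<and> d b = q"
proof -
  obtain x where "case x of (a, b) \<Rightarrow> composable L a b \<and> l = cComp L a b \<and> d a = p \<and> d b = q"
    using ex1_implies_ex[OF dfac_one[OF assms]] by blast
  then show ?thesis by (cases x) blast
qed

lemma dfac_uniq:
  assumes "l \<in> cMor L" "d l = (\<lambda>i. p i + q i)"
    "composable L a b" "l = cComp L a b" "d a = p" "d b = q"
    "composable L a' b'" "l = cComp L a' b'" "d a' = p" "d b' = q"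
  shows "a = a' \<and> b = b'"
proof -
  have "(a, b) = (a', b')"
    by (rule ex1_two[OF dfac_one[OF assms(1,2)]]) (use assms(3-10) in simp_all)
  then show ?thesis by simp
qed

lemma uniq:
  assumes "composable L a b" "composable L a' b'" "cComp L a b = cComp L a' b'" "d a = d a'"
  shows "a = a' \<and> b = b'"
proof -
  have l: "cComp L a b \<in> cMor L" using cat_comp[OF catL assms(1)] by blast
  have "d (cComp L a b) = (\<lambda>i. d a i + d b i)" using dcomp[OF assms(1)] .
  moreover have "d (cComp L a' b') = (\<lambda>i. d a' i + d b' i)" using dcomp[OF assms(2)] .
  ultimately have "(\<lambda>i. d a i + d b i) = (\<lambda>i. d a' i + d b' i)" using assms(3) by simp
  then have "\<And>i. d a i + d b i = d a' i + d b' i" by meson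
  then have "\<And>i. d b i = d b' i" using assms(4) by simp
  then have "d b = d b'" by (rule ext)
  then show ?thesis
    using dfac_uniq[OF l dcomp[OF assms(1)] assms(1) refl refl refl assms(2)] assms(3,4) by simp
qed

lemma d0:
  assumes "l \<in> cMor L" "d l = (\<lambda>i. 0)"
  shows "l = cId L (cSrc L l)"
proof -
  have o: "cSrc L l \<in> cObj L" "cRng L l \<in> cObj L" using cat_obj[OF catL assms(1)] by auto
  have c1: "composable L (cId L (cRng L l)) l"
    using cat_id[OF catL o(2)] assms(1) unfolding composable_def by simp
  have c2: "composable L l (cId L (cSrc L l))"
    using cat_id[OF catL o(1)] assms(1) unfolding composable_def by simp
  have "cComp L (cId L (cRng L l)) l = cComp L l (cId L (cSrc L l))"
    using cat_idl[OF catL assms(1)] cat_idr[OF catL assms(1)] by simp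
  moreover have "d (cId L (cRng L l)) = d l" using did[OF o(2)] assms(2) by simp
  ultimately show ?thesis using uniq[OF c1 c2] by simp
qed

end


context zs
begin

definition join :: "'m \<Rightarrow> 'm \<Rightarrow> nat \<Rightarrow> nat" where
  "join l1 l2 = (\<lambda>i. max (d l1 i) (d l2 i))"

definition Mset :: "'m \<Rightarrow> 'm \<Rightarrow> 'm set" where
  "Mset l1 l2 = {lam \<in> cMor L. d lam = join l1 l2 \<and>
     (\<exists>b. composable L l1 b \<and> lam = cComp L l1 b) \<and> (\<exists>b. composable L l2 b \<and> lam = cComp L l2 b)}"

lemma sub:
  assumes c: "composable L l1 x1" and p1: "\<And>i. d l1 i \<le> p i" and p2: "\<And>i. p i \<le> d (cComp L l1 x1) i"
  shows "\<exists>lam y b. composable L lam y \<and> cComp L l1 x1 = cComp L lam y \<and> d lam = p \<and>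
           composable L l1 b \<and> lam = cComp L l1 b \<and> x1 = cComp L b y"
proof -
  let ?mu = "cComp L l1 x1"
  have mu: "?mu \<in> cMor L" using cat_comp[OF catL c] by blast
  have e1: "d ?mu = (\<lambda>i. p i + (d ?mu i - p i))" using p2 by (auto simp: fun_eq_iff)
  obtain lam y where ly: "composable L lam y" "?mu = cComp L lam y" "d lam = p"
    using dfac_ex[OF mu e1] by blast
  have lam: "lam \<in> cMor L" using ly(1) unfolding composable_def by blast
  have e2: "d lam = (\<lambda>i. d l1 i + (p i - d l1 i))" using ly(3) p1 by (auto simp: fun_eq_iff)
  obtain u b where ub: "composable L u b" "lam = cComp L u b" "d u = d l1"
    using dfac_ex[OF lam e2] by blast
  have bl: "composable L b y"
    using ub(1,2) ly(1) cat_comp(2)[OF catL ub(1)] unfolding composable_def by simp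
  have uby: "composable L u (cComp L b y)"
    using ub(1) cat_comp[OF catL bl] unfolding composable_def by simp
  have "cComp L l1 x1 = cComp L u (cComp L b y)"
    using ly(2) ub(2) cat_assoc[OF catL ub(1) bl] by simp
  then have "u = l1 \<and> cComp L b y = x1" using uniq[OF uby c] ub(3) by metis
  then show ?thesis using ly ub bl by metis
qed

end


context zs
begin

lemma Mset_finite:
  assumes l1: "l1 \<in> cMor L" and l2: "l2 \<in> cMor L"
  shows "finite (Mset l1 l2)"
proof -
  obtain F0 where F0: "finite F0" "F0 \<subseteq> cMor L"
    "rideal L (cMor L) l1 \<inter> rideal L (cMor L) l2 = (\<Union>c\<in>F0. rideal L (cMor L) c)"
    using fa l1 l2 unfolding finitely_aligned_def by meson
  have "Mset l1 l2 \<subseteq> F0"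
  proof
    fix lam assume lm: "lam \<in> Mset l1 l2"
    then obtain b1 b2 where b: "composable L l1 b1" "lam = cComp L l1 b1"
      "composable L l2 b2" "lam = cComp L l2 b2" and dl: "d lam = join l1 l2" and lamL: "lam \<in> cMor L"
      unfolding Mset_def by blast
    have "lam \<in> rideal L (cMor L) l1 \<inter> rideal L (cMor L) l2"
      using b unfolding rideal_def composable_def by blast
    then obtain c u where cu: "c \<in> F0" "u \<in> cMor L" "composable L c u" "lam = cComp L c u"
      using F0(3) unfolding rideal_def by blast
    have cL: "c \<in> cMor L" using cu(1) F0(2) by blast
    have sc: "cSrc L c \<in> cObj L" using cat_obj[OF catL cL] by blast
    have cid: "composable L c (cId L (cSrc L c))"
      using cat_id[OF catL sc] cL unfolding composable_def by simp
    have "c \<in> rideal L (cMor L) c"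
      unfolding rideal_def using cid cat_idr[OF catL cL] unfolding composable_def by force
    then have "c \<in> rideal L (cMor L) l1 \<inter> rideal L (cMor L) l2" using F0(3) cu(1) by blast
    then obtain v1 v2 where v: "composable L l1 v1" "c = cComp L l1 v1"
      "composable L l2 v2" "c = cComp L l2 v2"
      unfolding rideal_def by blast
    have "\<And>i. d l1 i \<le> d c i" using dcomp[OF v(1)] v(2) by simp
    moreover have "\<And>i. d l2 i \<le> d c i" using dcomp[OF v(3)] v(4) by simp
    ultimately have "\<And>i. d lam i \<le> d c i" using dl unfolding join_def by simp
    moreover have "\<And>i. d lam i = d c i + d u i" using dcomp[OF cu(3)] cu(4) by simp
    ultimately have "\<And>i. d u i = 0" by (metis add_le_same_cancel1 le_zero_eq)
    then have "u = cId L (cSrc L u)" using d0[OF cu(2)] by (simp add: fun_eq_iff)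
    moreover have "cRng L u = cSrc L c" using cu(3) unfolding composable_def by simp
    moreover have "cSrc L u = cRng L u" using d0[OF cu(2)] cat_id[OF catL, of "cSrc L u"]
      cat_obj[OF catL cu(2)] by (metis calculation(1))
    ultimately have "u = cId L (cSrc L c)" by simp
    then have "lam = c" using cu(4) cat_idr[OF catL cL] by simp
    then show "lam \<in> F0" using cu(1) by simp
  qed
  then show ?thesis using F0(1) finite_subset by blast
qed

lemma ss_act:
  assumes "g \<in> cMor G" "l \<in> cMor L" "cSrc G g = cRng L l"
  shows "act g l \<in> cMor L" "res g l \<in> cMor G" "cRng L (act g l) = cRng G g"
    "cSrc G (res g l) = cSrc L l" "cSrc L (act g l) = cRng G (res g l)" "d (act g l) = d l"
  using ss assms unfolding self_similar_def by blast+

lemma act_id: "l \<in> cMor L \<Longrightarrow> act (cId G (cRng L l)) l = l"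
  using ss unfolding self_similar_def by blast

lemma act_comp:
  assumes "composable G g h" "l \<in> cMor L" "cSrc G h = cRng L l"
  shows "act (cComp G g h) l = act g (act h l)"
    "res (cComp G g h) l = cComp G (res g (act h l)) (res h l)"
  using ss assms unfolding self_similar_def by blast+

lemma act_compL:
  assumes "g \<in> cMor G" "composable L l m" "cSrc G g = cRng L l"
  shows "act g (cComp L l m) = cComp L (act g l) (act (res g l) m)"
    "res g (cComp L l m) = res (res g l) m"
  using ss assms unfolding self_similar_def by blast+

lemma res_id:
  assumes l: "l \<in> cMor L"
  shows "res (cId G (cRng L l)) l = cId G (cSrc L l)"
proof -
  have o: "cRng L l \<in> cObj G" using cat_obj[OF catL l] objs by simp
  let ?i = "cId G (cRng L l)"
  have i: "?i \<in> cMor G" "cSrc G ?i = cRng L l" "cRng G ?i = cRng L l" using cat_id[OF catG o] by auto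
  have ii: "composable G ?i ?i" using i unfolding composable_def by simp
  have iii: "cComp G ?i ?i = ?i" using cat_idl[OF catG i(1)] i by simp
  let ?e = "res ?i l"
  have e: "?e \<in> cMor G" "cSrc G ?e = cSrc L l" "cRng G ?e = cSrc L l"
    using ss_act[OF i(1) l i(2)] act_id[OF l] by auto
  have "?e = cComp G ?e ?e" using act_comp(2)[OF ii l i(2)] iii act_id[OF l] by simp
  moreover have "?e = cComp G ?e (cId G (cSrc G ?e))" using cat_idr[OF catG e(1)] by simp
  moreover have "composable G ?e ?e" using e unfolding composable_def by simp
  moreover have "composable G ?e (cId G (cSrc G ?e))"
    using e cat_id[OF catG, of "cSrc G ?e"] cat_obj[OF catG e(1)] unfolding composable_def by simp
  ultimately have "?e = cId G (cSrc G ?e)" using grp_cancel[OF grpG] by metis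
  then show ?thesis using e by simp
qed

lemma act_inv:
  assumes g: "g \<in> cMor G" and gi: "composable G gi g" "cComp G gi g = cId G (cSrc G g)"
    and m: "m \<in> cMor L" "cSrc G g = cRng L m"
  shows "act gi (act g m) = m"
  using act_comp(1)[OF gi(1) m] gi(2) m act_id[OF m(1)] by simp

end


context zs
begin

abbreviation "X \<equiv> zappa_szep L G act res"

lemma X_simps:
  "(l, g) \<in> cMor X \<longleftrightarrow> l \<in> cMor L \<and> g \<in> cMor G \<and> cSrc L l = cRng G g"
  "cSrc X (l, g) = cSrc G g" "cRng X (l, g) = cRng L l"
  "cComp X (l, g) (m, h) = (cComp L l (act g m), cComp G (res g m) h)"
  "cId X v = (cId L v, cId G v)"
  "cObj X = cObj L"
  by (simp_all add: zappa_szep_def)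

lemma X_composable:
  "composable X (l, g) (m, h) \<longleftrightarrow>
     l \<in> cMor L \<and> g \<in> cMor G \<and> cSrc L l = cRng G g \<and>
     m \<in> cMor L \<and> h \<in> cMor G \<and> cSrc L m = cRng G h \<and> cSrc G g = cRng L m"
  unfolding composable_def X_simps by blast

lemma X_close_pair:
  assumes c: "composable X (l, g) (m, h)"
  shows "composable L l (act g m)" "composable G (res g m) h"
    "cComp X (l, g) (m, h) \<in> cMor X"
    "cSrc X (cComp X (l, g) (m, h)) = cSrc G h"
    "cRng X (cComp X (l, g) (m, h)) = cRng L l"
    "d (fst (cComp X (l, g) (m, h))) = (\<lambda>i. d l i + d m i)"
proof -
  have a: "l \<in> cMor L" "g \<in> cMor G" "cSrc L l = cRng G g"
     "m \<in> cMor L" "h \<in> cMor G" "cSrc L m = cRng G h" "cSrc G g = cRng L m"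
    using c unfolding X_composable by auto
  note s = ss_act[OF a(2) a(4) a(7)]
  show c1: "composable L l (act g m)" using s a unfolding composable_def by simp
  show c2: "composable G (res g m) h" using s a unfolding composable_def by simp
  note k1 = cat_comp[OF catL c1] and k2 = cat_comp[OF catG c2]
  show "cComp X (l, g) (m, h) \<in> cMor X" unfolding X_simps using k1 k2 s by simp
  show "cSrc X (cComp X (l, g) (m, h)) = cSrc G h" unfolding X_simps using k2 by simp
  show "cRng X (cComp X (l, g) (m, h)) = cRng L l" unfolding X_simps using k1 by simp
  show "d (fst (cComp X (l, g) (m, h))) = (\<lambda>i. d l i + d m i)"
    unfolding X_simps using dcomp[OF c1] s by simp
qed

lemma X_close:
  assumes c: "composable X a b"
  shows "cComp X a b \<in> cMor X" "cSrc X (cComp X a b) = cSrc X b"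
    "cRng X (cComp X a b) = cRng X a"
    "d (fst (cComp X a b)) = (\<lambda>i. d (fst a) i + d (fst b) i)"
proof -
  obtain l g m h where ab: "a = (l, g)" "b = (m, h)" by (cases a, cases b) auto
  show "cComp X a b \<in> cMor X" "cSrc X (cComp X a b) = cSrc X b"
    "cRng X (cComp X a b) = cRng X a"
    "d (fst (cComp X a b)) = (\<lambda>i. d (fst a) i + d (fst b) i)"
    using X_close_pair[of l g m h] c unfolding ab X_simps by auto
qed

lemma X_assoc:
  assumes ab: "composable X a b" and bc: "composable X b c"
  shows "cComp X (cComp X a b) c = cComp X a (cComp X b c)"
proof -
  obtain l g m h n j where e: "a = (l, g)" "b = (m, h)" "c = (n, j)"
    by (cases a, cases b, cases c) auto
  have A: "l \<in> cMor L" "g \<in> cMor G" "cSrc L l = cRng G g"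
     "m \<in> cMor L" "h \<in> cMor G" "cSrc L m = cRng G h" "cSrc G g = cRng L m"
    using ab unfolding e X_composable by auto
  have B: "n \<in> cMor L" "j \<in> cMor G" "cSrc L n = cRng G j" "cSrc G h = cRng L n"
    using bc unfolding e X_composable by auto
  note s1 = ss_act[OF A(2) A(4) A(7)] and s2 = ss_act[OF A(5) B(1) B(4)]
  have c1: "composable L l (act g m)" and c2: "composable G (res g m) h"
    using X_close_pair[OF ab[unfolded e]] by auto
  have c3: "composable L m (act h n)" and c4: "composable G (res h n) j"
    using X_close_pair[OF bc[unfolded e]] by auto
  have r1: "cSrc G (res g m) = cRng L (act h n)" using s1 s2 A by simp
  note s3 = ss_act[OF s1(2) s2(1) r1]
  have c5: "composable L (act g m) (act (res g m) (act h n))"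
    using s1 s3 unfolding composable_def by simp
  have c6: "composable G (res (res g m) (act h n)) (res h n)"
    using s2 s3 unfolding composable_def by simp
  have eq1: "act (cComp G (res g m) h) n = act (res g m) (act h n)"
    using act_comp(1)[OF c2 B(1) B(4)] .
  have eq2: "res (cComp G (res g m) h) n = cComp G (res (res g m) (act h n)) (res h n)"
    using act_comp(2)[OF c2 B(1) B(4)] .
  have eq3: "act g (cComp L m (act h n)) = cComp L (act g m) (act (res g m) (act h n))"
    using act_compL(1)[OF A(2) c3 A(7)] .
  have eq4: "res g (cComp L m (act h n)) = res (res g m) (act h n)"
    using act_compL(2)[OF A(2) c3 A(7)] .
  have "cComp L (cComp L l (act g m)) (act (res g m) (act h n))
        = cComp L l (cComp L (act g m) (act (res g m) (act h n)))"
    using cat_assoc[OF catL c1 c5] .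
  moreover have "cComp G (cComp G (res (res g m) (act h n)) (res h n)) j
        = cComp G (res (res g m) (act h n)) (cComp G (res h n) j)"
    using cat_assoc[OF catG c6 c4] .
  ultimately show ?thesis unfolding e X_simps using eq1 eq2 eq3 eq4 by simp
qed

lemma X_cancel:
  assumes ab: "composable X a b" and ab': "composable X a b'"
    and eq: "cComp X a b = cComp X a b'"
  shows "b = b'"
proof -
  obtain l g m h m' h' where e: "a = (l, g)" "b = (m, h)" "b' = (m', h')"
    by (cases a, cases b, cases b') auto
  have A: "g \<in> cMor G" "m \<in> cMor L" "cSrc G g = cRng L m" "m' \<in> cMor L" "cSrc G g = cRng L m'"
    using ab ab' unfolding e X_composable by auto
  have c1: "composable L l (act g m)" "composable G (res g m) h"
    using X_close_pair[OF ab[unfolded e]] by auto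
  have c2: "composable L l (act g m')" "composable G (res g m') h'"
    using X_close_pair[OF ab'[unfolded e]] by auto
  have "cComp L l (act g m) = cComp L l (act g m')" using eq unfolding e X_simps by simp
  then have "act g m = act g m'" using uniq[OF c1(1) c2(1)] by simp
  moreover obtain gi where gi: "composable G gi g" "cComp G gi g = cId G (cSrc G g)"
    using grp_inv[OF grpG A(1)] by metis
  ultimately have mm: "m = m'" using act_inv[OF A(1) gi A(2,3)] act_inv[OF A(1) gi A(4,5)] by metis
  have "cComp G (res g m) h = cComp G (res g m) h'" using eq mm unfolding e X_simps by simp
  then have "h = h'" using grp_cancel[OF grpG c1(2)] c2(2) mm by simp
  then show ?thesis using e mm by simp
qed

lemma X_reach:
  assumes lg: "(l, g) \<in> cMor X" and lb: "composable L l b"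
  shows "\<exists>a. composable X (l, g) a \<and> cComp X (l, g) a = (cComp L l b, cId G (cSrc L b))
             \<and> d (fst a) = d b"
proof -
  have A: "l \<in> cMor L" "g \<in> cMor G" "cSrc L l = cRng G g" using lg unfolding X_simps by auto
  have B: "b \<in> cMor L" "cSrc L l = cRng L b" using lb unfolding composable_def by auto
  obtain gi where gi: "composable G g gi" "composable G gi g" "cComp G g gi = cId G (cRng G g)"
    using grp_inv[OF grpG A(2)] by metis
  have gi2: "gi \<in> cMor G" "cSrc G gi = cRng G g" "cSrc G g = cRng G gi"
    using gi unfolding composable_def by auto
  have r: "cSrc G gi = cRng L b" using gi2 A B by simp
  let ?m = "act gi b"
  note s = ss_act[OF gi2(1) B(1) r]
  have ab: "act g ?m = b"
    using act_comp(1)[OF gi(1) B(1) r] gi(3) A B act_id[OF B(1)] by simp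
  have r2: "cSrc G g = cRng L ?m" using s gi2 by simp
  note s' = ss_act[OF A(2) s(1) r2]
  let ?e = "res g ?m"
  obtain ei where ei: "composable G ?e ei" "cComp G ?e ei = cId G (cRng G ?e)"
    using grp_inv[OF grpG s'(2)] by metis
  have ei2: "ei \<in> cMor G" "cSrc G ?e = cRng G ei" using ei unfolding composable_def by auto
  have "composable X (l, g) (?m, ei)" unfolding X_composable
    using A s s' ei2 r2 by simp
  moreover have "cComp X (l, g) (?m, ei) = (cComp L l b, cId G (cSrc L b))"
    unfolding X_simps using ab ei(2) s' by simp
  moreover have "d (fst (?m, ei)) = d b" using s by simp
  ultimately show ?thesis by blast
qed

end


context zs
begin

lemma core:
  assumes a1: "composable X (l1, g1) x1" and a2: "composable X (l2, g2) x2"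
    and eq: "cComp X (l1, g1) x1 = cComp X (l2, g2) x2"
  shows "\<exists>lam y0. lam \<in> Mset l1 l2 \<and> composable L lam y0 \<and>
     fst (cComp X (l1, g1) x1) = cComp L lam y0 \<and>
     composable X (lam, cId G (cSrc L lam)) (y0, snd (cComp X (l1, g1) x1)) \<and>
     cComp X (l1, g1) x1 = cComp X (lam, cId G (cSrc L lam)) (y0, snd (cComp X (l1, g1) x1))"
proof -
  obtain m1 h1 m2 h2 where x: "x1 = (m1, h1)" "x2 = (m2, h2)" by (cases x1, cases x2) auto
  let ?z = "cComp X (l1, g1) x1"
  let ?mu = "fst ?z" and ?eta = "snd ?z"
  have k1: "composable L l1 (act g1 m1)" using X_close_pair(1)[OF a1[unfolded x]] .
  have k2: "composable L l2 (act g2 m2)" using X_close_pair(1)[OF a2[unfolded x]] .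
  have mu1: "?mu = cComp L l1 (act g1 m1)" unfolding x X_simps by simp
  have mu2: "?mu = cComp L l2 (act g2 m2)" using eq unfolding x X_simps by simp
  have d1: "\<And>i. d l1 i \<le> d ?mu i" using dcomp[OF k1] mu1 by simp
  have d2: "\<And>i. d l2 i \<le> d ?mu i" using dcomp[OF k2] mu2 by simp
  have p1: "\<And>i. d l1 i \<le> join l1 l2 i" "\<And>i. d l2 i \<le> join l1 l2 i" unfolding join_def by auto
  have p2: "\<And>i. join l1 l2 i \<le> d ?mu i" unfolding join_def using d1 d2 by simp
  have p2a: "\<And>i. join l1 l2 i \<le> d (cComp L l1 (act g1 m1)) i" using p2 mu1 by simp
  have p2b: "\<And>i. join l1 l2 i \<le> d (cComp L l2 (act g2 m2)) i" using p2 mu2 by simp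
  obtain lam y0 b1 where s1: "composable L lam y0" "cComp L l1 (act g1 m1) = cComp L lam y0"
     "d lam = join l1 l2" "composable L l1 b1" "lam = cComp L l1 b1"
    using sub[OF k1 p1(1) p2a] by blast
  obtain lam' y0' b2 where s2: "composable L lam' y0'" "cComp L l2 (act g2 m2) = cComp L lam' y0'"
     "d lam' = join l1 l2" "composable L l2 b2" "lam' = cComp L l2 b2"
    using sub[OF k2 p1(2) p2b] by blast
  have "cComp L lam y0 = cComp L lam' y0'" by (metis s1(2) s2(2) mu1 mu2)
  then have "lam = lam'" using uniq[OF s1(1) s2(1)] s1(3) s2(3) by simp
  then have lamM: "lam \<in> Mset l1 l2" unfolding Mset_def using s1 s2
    unfolding composable_def by blast
  have zX: "?z \<in> cMor X" using X_close(1)[OF a1] .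
  have zp: "?z = (?mu, ?eta)" by simp
  have eta: "?eta \<in> cMor G" "cSrc L ?mu = cRng G ?eta" using zX zp unfolding X_simps
    by (metis X_simps(1) prod.collapse)+
  have ly: "lam \<in> cMor L" "y0 \<in> cMor L" "cSrc L lam = cRng L y0"
    using s1(1) unfolding composable_def by auto
  have smu: "cSrc L ?mu = cSrc L y0" using cat_comp(2)[OF catL s1(1)] s1(2) mu1 by simp
  have o: "cSrc L lam \<in> cObj G" using cat_obj[OF catL ly(1)] objs by simp
  note ii = cat_id[OF catG o]
  have comp: "composable X (lam, cId G (cSrc L lam)) (y0, ?eta)"
    unfolding X_composable using ly ii eta smu by simp
  have "cComp X (lam, cId G (cSrc L lam)) (y0, ?eta) = (cComp L lam y0, ?eta)"
    unfolding X_simps using act_id[OF ly(2)] res_id[OF ly(2)] ly(3)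
      cat_idl[OF catG eta(1)] eta(2) smu by simp
  moreover have "?z = (cComp L lam y0, ?eta)" using s1(2) mu1 by (metis prod.collapse)
  ultimately have "?z = cComp X (lam, cId G (cSrc L lam)) (y0, ?eta)" by simp
  then show ?thesis using lamM s1 mu1 comp by metis
qed

lemma C_mem: "x \<in> gamma_zs k L d G act res \<longleftrightarrow> x \<in> cMor X \<and> d (fst x) k = 0"
  by (cases x) (simp add: gamma_zs_def)

lemma C_close:
  assumes "composable X a b" "a \<in> gamma_zs k L d G act res" "b \<in> gamma_zs k L d G act res"
  shows "cComp X a b \<in> gamma_zs k L d G act res"
  using X_close[OF assms(1)] assms(2,3) unfolding C_mem by simp

lemma C_id:
  assumes "v \<in> cObj L"
  shows "cId X v \<in> gamma_zs k L d G act res"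
proof -
  have "v \<in> cObj G" using assms objs by simp
  then show ?thesis unfolding C_mem X_simps
    using cat_id[OF catG] cat_id[OF catL assms] did[OF assms] by simp
qed

theorem main: "concordant X (gamma_zs k L d G act res)"
proof -
  let ?C = "gamma_zs k L d G act res"
  have subc: "subcategory X ?C"
    unfolding subcategory_def
  proof (intro conjI ballI)
    show "?C \<subseteq> cMor X" using C_mem by blast
  next
    fix a assume "a \<in> ?C"
    then obtain l g where a: "a = (l, g)" "(l, g) \<in> cMor X" unfolding C_mem by (cases a) auto
    then have "l \<in> cMor L" "g \<in> cMor G" unfolding X_simps by auto
    then have "cRng L l \<in> cObj L" "cSrc G g \<in> cObj L"
      using cat_obj[OF catL] cat_obj[OF catG] objs by auto
    then show "cId X (cRng X a) \<in> ?C" "cId X (cSrc X a) \<in> ?C"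
      using C_id unfolding a X_simps by auto
  next
    fix a b assume "a \<in> ?C" "b \<in> ?C"
    then show "composable X a b \<longrightarrow> cComp X a b \<in> ?C" using C_close by blast
  qed
  show ?thesis unfolding concordant_def
  proof (intro conjI subc ballI impI)
    fix c1 c2 assume c1: "c1 \<in> ?C" and c2: "c2 \<in> ?C"
    obtain l1 g1 l2 g2 where ce: "c1 = (l1, g1)" "c2 = (l2, g2)" by (cases c1, cases c2) auto
    have cX: "(l1, g1) \<in> cMor X" "(l2, g2) \<in> cMor X" "d l1 k = 0" "d l2 k = 0"
      using c1 c2 unfolding ce C_mem by auto
    have lL: "l1 \<in> cMor L" "l2 \<in> cMor L" using cX unfolding X_simps by auto
    define F where "F = (\<lambda>lam. (lam, cId G (cSrc L lam))) ` Mset l1 l2"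
    have finF: "finite F" unfolding F_def using Mset_finite[OF lL] by simp
    have FC: "F \<subseteq> ?C"
    proof
      fix f assume "f \<in> F"
      then obtain lam where lm: "lam \<in> Mset l1 l2" "f = (lam, cId G (cSrc L lam))"
        unfolding F_def by blast
      have l: "lam \<in> cMor L" "d lam = join l1 l2" using lm(1) unfolding Mset_def by auto
      have o: "cSrc L lam \<in> cObj G" using cat_obj[OF catL l(1)] objs by simp
      show "f \<in> ?C" unfolding lm(2) C_mem X_simps
        using l cat_id[OF catG o] cX(3,4) unfolding join_def by simp
    qed
    have indep: "independent X F" unfolding independent_def
    proof (intro ballI impI notI)
      fix a a' assume aF: "a \<in> F" and a'F: "a' \<in> F" and ne: "a \<noteq> a'"
        and ar: "a \<in> rideal X (cMor X) a'"
      obtain lam lam' where lm: "lam \<in> Mset l1 l2" "a = (lam, cId G (cSrc L lam))"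
        "lam' \<in> Mset l1 l2" "a' = (lam', cId G (cSrc L lam'))"
        using aF a'F unfolding F_def by blast
      obtain w where w: "composable X a' w" "a = cComp X a' w" using ar unfolding rideal_def by blast
      obtain m h where wm: "w = (m, h)" by (cases w) auto
      have A: "lam' \<in> cMor L" "m \<in> cMor L" "cSrc G (cId G (cSrc L lam')) = cRng L m"
        using w(1) unfolding lm wm X_composable by auto
      have o: "cSrc L lam' \<in> cObj G" using cat_obj[OF catL A(1)] objs by simp
      have rm: "cRng L m = cSrc L lam'" using A(3) cat_id[OF catG o] by simp
      have lc: "composable L lam' m" using A rm unfolding composable_def by simp
      have eql: "lam = cComp L lam' m"
        using w(2) act_id[OF A(2)] rm unfolding lm wm X_simps by simp
      have "d lam = d lam'" using lm unfolding Mset_def by simp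
      then have "d m = (\<lambda>i. 0)" using dcomp[OF lc] eql by (auto simp: fun_eq_iff)
      then have "m = cId L (cSrc L m)" using d0[OF A(2)] by simp
      moreover then have "cRng L m = cSrc L m" using cat_id[OF catL cat_obj(1)[OF catL A(2)]] by metis
      ultimately have "m = cId L (cSrc L lam')" using rm by simp
      then have "lam = lam'" using eql cat_idr[OF catL A(1)] by simp
      then show False using ne lm by simp
    qed
    have reach1: "\<exists>a1. composable X c1 a1 \<and> cComp X c1 a1 = f \<and> a1 \<in> ?C"
      if fF0: "f \<in> F" for f
    proof -
      obtain lam where lm: "lam \<in> Mset l1 l2" "f = (lam, cId G (cSrc L lam))"
        using fF0 unfolding F_def by blast
      obtain b where b: "composable L l1 b" "lam = cComp L l1 b" and dl: "d lam = join l1 l2"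
        using lm(1) unfolding Mset_def by blast
      obtain a where a: "composable X (l1, g1) a" "cComp X (l1, g1) a = (cComp L l1 b, cId G (cSrc L b))"
        "d (fst a) = d b" using X_reach[OF cX(1) b(1)] by blast
      have dbk: "d b k = 0" using dcomp[OF b(1)] b(2) dl cX(3,4) unfolding join_def
        by (metis add_is_0 max.idem)
      have aX: "a \<in> cMor X" using a(1) unfolding composable_def by blast
      have sb: "cSrc L b = cSrc L lam" using b cat_comp(2)[OF catL b(1)] by simp
      have aC: "a \<in> ?C" unfolding C_mem using aX a(3) dbk by simp
      have "cComp X c1 a = f" using a(2) lm(2) b(2) sb ce by simp
      then show ?thesis using a(1) aC ce by blast
    qed
    have reach2: "\<exists>a2. composable X c2 a2 \<and> cComp X c2 a2 = f \<and> a2 \<in> ?C"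
      if fF0: "f \<in> F" for f
    proof -
      obtain lam where lm: "lam \<in> Mset l1 l2" "f = (lam, cId G (cSrc L lam))"
        using fF0 unfolding F_def by blast
      obtain b where b: "composable L l2 b" "lam = cComp L l2 b" and dl: "d lam = join l1 l2"
        using lm(1) unfolding Mset_def by blast
      obtain a where a: "composable X (l2, g2) a" "cComp X (l2, g2) a = (cComp L l2 b, cId G (cSrc L b))"
        "d (fst a) = d b" using X_reach[OF cX(2) b(1)] by blast
      have dbk: "d b k = 0" using dcomp[OF b(1)] b(2) dl cX(3,4) unfolding join_def
        by (metis add_is_0 max.idem)
      have aX: "a \<in> cMor X" using a(1) unfolding composable_def by blast
      have sb: "cSrc L b = cSrc L lam" using b cat_comp(2)[OF catL b(1)] by simp
      have aC: "a \<in> ?C" unfolding C_mem using aX a(3) dbk by simp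
      have "cComp X c2 a = f" using a(2) lm(2) b(2) sb ce by simp
      then show ?thesis using a(1) aC ce by blast
    qed
    have fact: "\<exists>a1 a2 y. composable X c1 a1 \<and> composable X c2 a2 \<and>
                 cComp X c1 a1 = cComp X c2 a2 \<and> cComp X c1 a1 \<in> F \<and>
                 composable X a1 y \<and> composable X a2 y \<and>
                 x1 = cComp X a1 y \<and> x2 = cComp X a2 y \<and> cComp X c1 x1 = cComp X (cComp X c1 a1) y"
      if x: "composable X c1 x1" "composable X c2 x2" "cComp X c1 x1 = cComp X c2 x2" for x1 x2
    proof -
      obtain lam y0 where co: "lam \<in> Mset l1 l2" "composable L lam y0"
        "composable X (lam, cId G (cSrc L lam)) (y0, snd (cComp X c1 x1))"
        "cComp X c1 x1 = cComp X (lam, cId G (cSrc L lam)) (y0, snd (cComp X c1 x1))"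
        using core[OF x[unfolded ce]] unfolding ce by blast
      define f where "f = (lam, cId G (cSrc L lam))"
      define y where "y = (y0, snd (cComp X c1 x1))"
      have fF: "f \<in> F" unfolding f_def F_def using co(1) by blast
      obtain a1 where a1: "composable X c1 a1" "cComp X c1 a1 = f" using reach1[OF fF] by blast
      obtain a2 where a2: "composable X c2 a2" "cComp X c2 a2 = f" using reach2[OF fF] by blast
      have fy: "composable X f y" using co(3) unfolding f_def y_def .
      have zf: "cComp X c1 x1 = cComp X f y" using co(4) unfolding f_def y_def .
      have yX: "y \<in> cMor X" using fy unfolding composable_def by blast
      have a1y: "composable X a1 y"
        using a1 fy yX X_close(2)[OF a1(1)] unfolding composable_def by auto
      have a2y: "composable X a2 y"
        using a2 fy yX X_close(2)[OF a2(1)] unfolding composable_def by auto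
      have e1: "cComp X c1 x1 = cComp X c1 (cComp X a1 y)"
        using zf a1(2) X_assoc[OF a1(1) a1y] by simp
      have e2: "cComp X c2 x2 = cComp X c2 (cComp X a2 y)"
        using zf x(3) a2(2) X_assoc[OF a2(1) a2y] by simp
      have k1: "composable X c1 (cComp X a1 y)"
        using a1(1) X_close[OF a1y] unfolding composable_def by auto
      have k2: "composable X c2 (cComp X a2 y)"
        using a2(1) X_close[OF a2y] unfolding composable_def by auto
      have "x1 = cComp X a1 y" using X_cancel[OF x(1) k1 e1] .
      moreover have "x2 = cComp X a2 y" using X_cancel[OF x(2) k2 e2] .
      ultimately show ?thesis using a1 a2 fF a1y a2y zf by metis
    qed
    show "\<exists>F. finite F \<and> F \<subseteq> ?C \<and> independent X F \<and>
           rideal X ?C c1 \<inter> rideal X ?C c2 = (\<Union>c\<in>F. rideal X ?C c) \<and>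
           (\<forall>x1 x2. composable X c1 x1 \<and> composable X c2 x2 \<and> cComp X c1 x1 = cComp X c2 x2 \<longrightarrow>
              (\<exists>a1 a2 y. composable X c1 a1 \<and> composable X c2 a2 \<and>
                 cComp X c1 a1 = cComp X c2 a2 \<and> cComp X c1 a1 \<in> F \<and>
                 composable X a1 y \<and> composable X a2 y \<and>
                 x1 = cComp X a1 y \<and> x2 = cComp X a2 y))"
    proof (rule exI[of _ F], intro conjI allI impI)
      show "finite F" "F \<subseteq> ?C" "independent X F" by (fact finF, fact FC, fact indep)
    next
      fix x1 x2 assume "composable X c1 x1 \<and> composable X c2 x2 \<and> cComp X c1 x1 = cComp X c2 x2"
      then show "\<exists>a1 a2 y. composable X c1 a1 \<and> composable X c2 a2 \<and>
                 cComp X c1 a1 = cComp X c2 a2 \<and> cComp X c1 a1 \<in> F \<and>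
                 composable X a1 y \<and> composable X a2 y \<and>
                 x1 = cComp X a1 y \<and> x2 = cComp X a2 y"
        using fact by blast
    next
      show "rideal X ?C c1 \<inter> rideal X ?C c2 = (\<Union>c\<in>F. rideal X ?C c)"
      proof
        show "rideal X ?C c1 \<inter> rideal X ?C c2 \<subseteq> (\<Union>c\<in>F. rideal X ?C c)"
        proof
          fix z assume "z \<in> rideal X ?C c1 \<inter> rideal X ?C c2"
          then obtain x1 x2 where x: "x1 \<in> ?C" "composable X c1 x1" "z = cComp X c1 x1"
            "x2 \<in> ?C" "composable X c2 x2" "z = cComp X c2 x2"
            unfolding rideal_def by blast
          then obtain a1 a2 y where fy: "composable X c1 a1" "cComp X c1 a1 \<in> F"
            "composable X a1 y" "cComp X c1 x1 = cComp X (cComp X c1 a1) y"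
            using fact[of x1 x2] by metis
          have fyc: "composable X (cComp X c1 a1) y"
            using fy(1,3) X_close[OF fy(1)] unfolding composable_def by auto
          have "d (fst z) k = 0" using X_close(4)[OF x(2)] x(1,3) c1 unfolding C_mem by simp
          then have "d (fst y) k = 0" using X_close(4)[OF fyc] fy(4) x(3) by simp
          then have "y \<in> ?C" using fy(3) unfolding C_mem composable_def by simp
          then show "z \<in> (\<Union>c\<in>F. rideal X ?C c)"
            using fy(2,4) fyc x(3) unfolding rideal_def by blast
        qed
      next
        show "(\<Union>c\<in>F. rideal X ?C c) \<subseteq> rideal X ?C c1 \<inter> rideal X ?C c2"
        proof
          fix z assume "z \<in> (\<Union>c\<in>F. rideal X ?C c)"
          then obtain f w where fw: "f \<in> F" "w \<in> ?C" "composable X f w" "z = cComp X f w"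
            unfolding rideal_def by blast
          obtain a1 where a1: "composable X c1 a1" "cComp X c1 a1 = f" "a1 \<in> ?C"
            using reach1[OF fw(1)] by blast
          obtain a2 where a2: "composable X c2 a2" "cComp X c2 a2 = f" "a2 \<in> ?C"
            using reach2[OF fw(1)] by blast
          have a1w: "composable X a1 w"
            using a1 fw(3) X_close(2)[OF a1(1)] unfolding composable_def by auto
          have a2w: "composable X a2 w"
            using a2 fw(3) X_close(2)[OF a2(1)] unfolding composable_def by auto
          have "z = cComp X c1 (cComp X a1 w)" using fw(4) a1(2) X_assoc[OF a1(1) a1w] by simp
          moreover have "composable X c1 (cComp X a1 w)"
            using a1(1) X_close[OF a1w] unfolding composable_def by auto
          moreover have "cComp X a1 w \<in> ?C" using C_close[OF a1w a1(3) fw(2)] .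
          moreover have "z = cComp X c2 (cComp X a2 w)" using fw(4) a2(2) X_assoc[OF a2(1) a2w] by simp
          moreover have "composable X c2 (cComp X a2 w)"
            using a2(1) X_close[OF a2w] unfolding composable_def by auto
          moreover have "cComp X a2 w \<in> ?C" using C_close[OF a2w a2(3) fw(2)] .
          ultimately show "z \<in> rideal X ?C c1 \<inter> rideal X ?C c2" unfolding rideal_def by blast
        qed
      qed
    qed
  qed
qed

end

theorem lemma3p16:
  fixes k :: nat
    and L :: "('v, 'm) cat" and d :: "'m \<Rightarrow> nat \<Rightarrow> nat"
    and G :: "('v, 'g) cat" and act :: "'g \<Rightarrow> 'm \<Rightarrow> 'm" and res :: "'g \<Rightarrow> 'm \<Rightarrow> 'g"
  assumes "k_graph (Suc k) L d"
    and "finitely_aligned L"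
    and "self_similar L d G act res"
  shows "concordant (zappa_szep L G act res) (gamma_zs k L d G act res)"
proof -
  interpret zs k L d G act res using assms by unfold_locales
  show ?thesis by (rule main)
qed

end
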